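(* Let $L>0$ and let $\gamma\in C^\infty([0,L],\mathbb{R}^2)$ be an arclength-parameterized plane curve with $\gamma(0)=0$, and with signed curvature $\kappa$ satisfying $\kappa(s)\kappa_s(s)>0$ for all $s\in(0,L)$. Then $\gamma(s)\neq0$ for all $s\in(0,L)$, so that a polar tangential angle function $\omega:(0,L)\to\mathbb{R}$ is defined, and $\kappa(s)\omega_s(s)>0$ for all $s\in(0,L)$; in particular $\omega$ is strictly monotone.
   Context: $T=\gamma_s$, $N=R_{\pi/2}T$ with $R_\theta$ the counterclockwise rotation by angle $\theta$, and $\gamma_{ss}=\kappa N$. For a curve with $\gamma(s)\neq0$ for $s\in(0,L)$, set $X:=\gamma/|\gamma|$; a polar tangential angle function is a smooth $\omega:(0,L)\to\mathbb{R}$ with $R_{\omega(s)}X(s)=T(s)$ for all $s\in(0,L)$. *)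

theory Defs
  imports "HOL-Analysis.Analysis"
begin

text \<open>The plane R^2 is identified with the complex numbers; the counterclockwise
rotation by angle theta is multiplication by cis theta.\<close>

definition rot :: "real \<Rightarrow> complex \<Rightarrow> complex" where
  "rot \<theta> v = cis \<theta> * v"

definition smooth_on :: "real set \<Rightarrow> (real \<Rightarrow> 'a::real_normed_vector) \<Rightarrow> bool" where
  "smooth_on S f \<longleftrightarrow> (\<exists>D. (\<forall>x\<in>S. D 0 x = f x) \<and>
      (\<forall>n. \<forall>x\<in>S. (D n has_vector_derivative D (Suc n) x) (at x within S)))"

definition tangent :: "real \<Rightarrow> (real \<Rightarrow> complex) \<Rightarrow> real \<Rightarrow> complex" where
  "tangent L \<gamma> s = vector_derivative \<gamma> (at s within {0..L})"

text \<open>Signed curvature: gamma_ss = kappa N with N = R_{pi/2} T = i T; for |T| = 1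
this means kappa = Im (conj T * gamma_ss).\<close>
definition curvature :: "real \<Rightarrow> (real \<Rightarrow> complex) \<Rightarrow> real \<Rightarrow> real" where
  "curvature L \<gamma> s = Im (cnj (tangent L \<gamma> s) * vector_derivative (tangent L \<gamma>) (at s within {0..L}))"

definition arclength_param :: "real \<Rightarrow> (real \<Rightarrow> complex) \<Rightarrow> bool" where
  "arclength_param L \<gamma> \<longleftrightarrow> (\<forall>s\<in>{0..L}. norm (tangent L \<gamma> s) = 1)"

definition polar_tangential_angle :: "real \<Rightarrow> (real \<Rightarrow> complex) \<Rightarrow> (real \<Rightarrow> real) \<Rightarrow> bool" where
  "polar_tangential_angle L \<gamma> \<omega> \<longleftrightarrow> smooth_on {0<..<L} \<omega> \<and>
     (\<forall>s\<in>{0<..<L}. rot (\<omega> s) (\<gamma> s / complex_of_real (norm (\<gamma> s))) = tangent L \<gamma> s)"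

end

theory Submission
  imports Defs
begin


lemma smooth_closed:
  assumes cl: "\<And>f. f \<in> F \<Longrightarrow> \<exists>g\<in>F. \<forall>x\<in>S. (f has_vector_derivative g x) (at x within S)"
    and f: "f \<in> F"
  shows "smooth_on S f"
proof -
  define der where "der h = (SOME g. g \<in> F \<and> (\<forall>x\<in>S. (h has_vector_derivative g x) (at x within S)))" for h
  have der: "der h \<in> F \<and> (\<forall>x\<in>S. (h has_vector_derivative der h x) (at x within S))" if "h \<in> F" for h
    unfolding der_def using someI_ex[OF cl[OF that, unfolded Bex_def]] by blast
  define D where "D n = (der ^^ n) f" for n
  have DF: "D n \<in> F" for n
    by (induction n) (auto simp: D_def f der)
  show ?thesis unfolding smooth_on_def
  proof (intro exI[of _ D] conjI ballI allI)
    fix n x assume "x \<in> S"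
    then show "(D n has_vector_derivative D (Suc n) x) (at x within S)"
      using der[OF DF[of n]] by (simp add: D_def)
  qed (simp add: D_def)
qed

inductive_set alg :: "(nat \<Rightarrow> real \<Rightarrow> complex) \<Rightarrow> (real \<Rightarrow> real) set" for D where
  alg_const: "(\<lambda>x. c) \<in> alg D"
| alg_Re: "(\<lambda>x. Re (D n x)) \<in> alg D"
| alg_Im: "(\<lambda>x. Im (D n x)) \<in> alg D"
| alg_q: "(\<lambda>x. inverse (Re (D 0 x) ^ 2 + Im (D 0 x) ^ 2)) \<in> alg D"
| alg_add: "f \<in> alg D \<Longrightarrow> g \<in> alg D \<Longrightarrow> (\<lambda>x. f x + g x) \<in> alg D"
| alg_diff: "f \<in> alg D \<Longrightarrow> g \<in> alg D \<Longrightarrow> (\<lambda>x. f x - g x) \<in> alg D"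
| alg_mult: "f \<in> alg D \<Longrightarrow> g \<in> alg D \<Longrightarrow> (\<lambda>x. f x * g x) \<in> alg D"

lemma alg_deriv:
  assumes dD: "\<And>n x. x \<in> S \<Longrightarrow> (D n has_vector_derivative D (Suc n) x) (at x)"
    and nz: "\<And>x. x \<in> S \<Longrightarrow> D 0 x \<noteq> 0"
    and f: "f \<in> alg D"
  shows "\<exists>g\<in>alg D. \<forall>x\<in>S. (f has_real_derivative g x) (at x)"
  using f
proof induction
  case (alg_const c)
  show ?case by (intro bexI[of _ "\<lambda>x. 0"]) (auto intro: alg.intros)
next
  case (alg_Re n)
  show ?case by (intro bexI[of _ "\<lambda>x. Re (D (Suc n) x)"]) (auto intro: alg.intros derivative_intros dD)
next
  case (alg_Im n)
  show ?case by (intro bexI[of _ "\<lambda>x. Im (D (Suc n) x)"]) (auto intro: alg.intros derivative_intros dD)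
next
  case alg_q
  let ?q = "\<lambda>x. inverse (Re (D 0 x) ^ 2 + Im (D 0 x) ^ 2)"
  show ?case
  proof (intro bexI[of _ "\<lambda>x. (-1) * ((2 * Re (D 0 x) * Re (D 1 x) + 2 * Im (D 0 x) * Im (D 1 x)) * (?q x * ?q x))"] ballI)
    fix x assume x: "x \<in> S"
    have ne: "Re (D 0 x) ^ 2 + Im (D 0 x) ^ 2 \<noteq> 0"
      using nz[OF x] by (simp add: complex_eq_iff)
    have "((\<lambda>x. Re (D 0 x) ^ 2 + Im (D 0 x) ^ 2) has_real_derivative
           (2 * Re (D 0 x) * Re (D 1 x) + 2 * Im (D 0 x) * Im (D 1 x))) (at x)"
      using dD[OF x, of 0] by (auto intro!: derivative_eq_intros)
    from DERIV_inverse'[OF this ne] show "(?q has_real_derivative (-1) * ((2 * Re (D 0 x) * Re (D 1 x) + 2 * Im (D 0 x) * Im (D 1 x)) * (?q x * ?q x))) (at x)"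
      by (simp add: algebra_simps)
  qed (intro alg.intros)+
next
  case (alg_add f g)
  then obtain f' g' where "f' \<in> alg D" "g' \<in> alg D" "\<forall>x\<in>S. (f has_real_derivative f' x) (at x)"
     "\<forall>x\<in>S. (g has_real_derivative g' x) (at x)" by blast
  then show ?case by (intro bexI[of _ "\<lambda>x. f' x + g' x"]) (auto intro: alg.intros derivative_intros)
next
  case (alg_diff f g)
  then obtain f' g' where "f' \<in> alg D" "g' \<in> alg D" "\<forall>x\<in>S. (f has_real_derivative f' x) (at x)"
     "\<forall>x\<in>S. (g has_real_derivative g' x) (at x)" by blast
  then show ?case by (intro bexI[of _ "\<lambda>x. f' x - g' x"]) (auto intro: alg.intros derivative_intros)
next
  case (alg_mult f g)
  then obtain f' g' where h1: "f' \<in> alg D" "g' \<in> alg D" and h2: "\<forall>x\<in>S. (f has_real_derivative f' x) (at x)"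
     "\<forall>x\<in>S. (g has_real_derivative g' x) (at x)" by blast
  show ?case
    apply (intro bexI[of _ "\<lambda>x. f x * g' x + f' x * g x"])
    using h2 apply (auto intro!: derivative_eq_intros)[1]
    by (rule alg.alg_add[OF alg.alg_mult[OF alg_mult.hyps(1) h1(2)] alg.alg_mult[OF h1(1) alg_mult.hyps(2)]])
qed

lemma hvd_cis:
  assumes "(f has_field_derivative d) (at x within A)"
  shows "((\<lambda>x. cis (f x)) has_vector_derivative (of_real d * \<i> * cis (f x))) (at x within A)"
proof -
  have "(f has_derivative (\<lambda>t. t * d)) (at x within A)"
    using assms by (simp add: has_field_derivative_def mult.commute[of _ d])
  from has_derivative_cis[OF this] show ?thesis
    by (simp add: has_vector_derivative_def scaleR_conv_of_real algebra_simps)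
qed

lemma hvd_cmod:
  fixes g :: "real \<Rightarrow> complex"
  assumes "(g has_vector_derivative g') (at x within A)" "g x \<noteq> 0"
  shows "((\<lambda>x. cmod (g x)) has_field_derivative (Re (cnj (g x) * g') / cmod (g x))) (at x within A)"
proof -
  have pos: "Re (g x) ^ 2 + Im (g x) ^ 2 > 0"
    using assms(2) by (simp add: complex_eq_iff add_pos_nonneg sum_power2_gt_zero_iff)
  have e: "(\<lambda>x. cmod (g x)) = (\<lambda>x. sqrt (Re (g x) ^ 2 + Im (g x) ^ 2))"
    by (simp add: cmod_def)
  have d1: "((\<lambda>x. Re (g x) ^ 2 + Im (g x) ^ 2) has_real_derivative 2*Re(g x)*Re g' + 2*Im(g x)*Im g') (at x within A)"
    using assms(1) by (auto intro!: derivative_eq_intros)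
  have d2: "((\<lambda>x. sqrt (Re (g x) ^ 2 + Im (g x) ^ 2)) has_real_derivative
     inverse (sqrt (Re (g x) ^ 2 + Im (g x) ^ 2)) / 2 * (2*Re(g x)*Re g' + 2*Im(g x)*Im g')) (at x within A)"
    by (rule DERIV_chain2[OF DERIV_real_sqrt[OF pos] d1])
  have eq: "inverse (sqrt (Re (g x) ^ 2 + Im (g x) ^ 2)) / 2 * (2*Re(g x)*Re g' + 2*Im(g x)*Im g')
     = Re (cnj (g x) * g') / cmod (g x)"
  proof -
    have "sqrt (Re (g x) ^ 2 + Im (g x) ^ 2) > 0" using pos by simp
    then show ?thesis unfolding cmod_def by (simp add: field_split_simps)
  qed
  show ?thesis unfolding e by (rule DERIV_cong[OF d2 eq])
qed




lemma sign_interval: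
  fixes f :: "real \<Rightarrow> real"
  assumes c: "continuous_on {t..s} f" and nz: "\<And>x. x \<in> {t..s} \<Longrightarrow> f x \<noteq> 0" and ts: "t \<le> s"
  shows "f t * f s > 0"
proof (rule ccontr)
  assume a: "\<not> f t * f s > 0"
  have ft: "f t \<noteq> 0" and fs: "f s \<noteq> 0" using nz ts by auto
  have "(f t < 0 \<and> 0 < f s) \<or> (f s < 0 \<and> 0 < f t)"
  proof (cases "f t < 0")
    case True
    then show ?thesis using a fs mult_neg_neg[of "f t" "f s"] by linarith
  next
    case False
    then show ?thesis using a fs ft mult_pos_pos[of "f t" "f s"] by linarith
  qed
  then obtain z where z: "t \<le> z" "z \<le> s" "f z = 0"
  proof
    assume "f t < 0 \<and> 0 < f s"
    then show ?thesis using IVT'[of f t 0 s] c ts that by auto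
  next
    assume "f s < 0 \<and> 0 < f t"
    then show ?thesis using IVT2'[of f s 0 t] c ts that by auto
  qed
  then show False using nz[of z] by auto
qed

locale cv =
  fixes L :: real and \<gamma> :: "real \<Rightarrow> complex" and D :: "nat \<Rightarrow> real \<Rightarrow> complex"
  assumes L: "L > 0"
    and D0: "\<And>x. x \<in> {0..L} \<Longrightarrow> D 0 x = \<gamma> x"
    and dD: "\<And>n x. x \<in> {0..L} \<Longrightarrow> (D n has_vector_derivative D (Suc n) x) (at x within {0..L})"
    and arc: "arclength_param L \<gamma>"
    and g0: "\<gamma> 0 = 0"
    and hyp: "\<And>s. s \<in> {0<..<L} \<Longrightarrow> curvature L \<gamma> s * deriv (curvature L \<gamma>) s > 0"
begin

abbreviation "I \<equiv> {0<..<L}"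
abbreviation "\<kappa> \<equiv> curvature L \<gamma>"

lemma dDa: "x \<in> I \<Longrightarrow> (D n has_vector_derivative D (Suc n) x) (at x)"
  using dD[of x n] at_within_interior[of x "{0..L}"] by auto

lemma contD: "continuous_on {0..L} (D n)"
  by (rule continuous_on_vector_derivative) (rule dD)

lemma gD: "x \<in> {0..L} \<Longrightarrow> (\<gamma> has_vector_derivative D 1 x) (at x within {0..L})"
  using has_vector_derivative_transform[of x "{0..L}" \<gamma> "D 0" "D 1 x"] dD[of x 0] D0 by simp

lemma Tg: "x \<in> {0..L} \<Longrightarrow> tangent L \<gamma> x = D 1 x"
  unfolding tangent_def using vector_derivative_within_closed_interval[OF L _ gD] by simp

lemma Tg': "x \<in> {0..L} \<Longrightarrow> vector_derivative (tangent L \<gamma>) (at x within {0..L}) = D 2 x"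
proof -
  assume x: "x \<in> {0..L}"
  have "(tangent L \<gamma> has_vector_derivative D 2 x) (at x within {0..L})"
    using has_vector_derivative_transform[of x "{0..L}" "tangent L \<gamma>" "D 1" "D 2 x"] dD[of x 1] Tg x
    by (simp add: numeral_2_eq_2)
  then show ?thesis by (rule vector_derivative_within_closed_interval[OF L x])
qed

lemma K: "x \<in> {0..L} \<Longrightarrow> \<kappa> x = Im (cnj (D 1 x) * D 2 x)"
  unfolding curvature_def using Tg Tg' by simp

lemma N1: "x \<in> {0..L} \<Longrightarrow> D 1 x * cnj (D 1 x) = 1"
proof -
  assume x: "x \<in> {0..L}"
  have "cmod (D 1 x) = 1" using arc x Tg unfolding arclength_param_def by auto
  then show ?thesis using complex_norm_square[of "D 1 x"] by simp
qed

lemma orth: "x \<in> I \<Longrightarrow> Re (cnj (D 1 x) * D 2 x) = 0"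
proof -
  assume x: "x \<in> I"
  have "((\<lambda>t. D 1 t * cnj (D 1 t)) has_vector_derivative (D 1 x * cnj (D 2 x) + D 2 x * cnj (D 1 x))) (at x)"
    using dDa[OF x, of 1] by (auto intro!: derivative_eq_intros simp: numeral_2_eq_2)
  moreover have "((\<lambda>t. D 1 t * cnj (D 1 t)) has_vector_derivative 0) (at x)"
    by (rule has_vector_derivative_transform_within_open[of "\<lambda>t. 1" 0 x I]) (use x N1 in auto)
  ultimately have "D 1 x * cnj (D 2 x) + D 2 x * cnj (D 1 x) = 0"
    using vector_derivative_unique_at by blast
  then have "Re (D 1 x * cnj (D 2 x) + D 2 x * cnj (D 1 x)) = 0" by simp
  then show ?thesis by (simp add: algebra_simps)
qed

lemma D2i: "x \<in> I \<Longrightarrow> D 2 x = \<i> * complex_of_real (\<kappa> x) * D 1 x"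
proof -
  assume x: "x \<in> I"
  have eq: "cnj (D 1 x) * D 2 x = \<i> * complex_of_real (\<kappa> x)"
    using orth[OF x] K[of x] x by (simp add: complex_eq_iff)
  have "D 2 x = (D 1 x * cnj (D 1 x)) * D 2 x" using N1[of x] x by simp
  also have "\<dots> = D 1 x * (cnj (D 1 x) * D 2 x)" by (simp only: mult.assoc)
  also have "\<dots> = D 1 x * (\<i> * complex_of_real (\<kappa> x))" using eq by simp
  finally show ?thesis by (simp only: ac_simps)
qed

lemma d0: "x \<in> I \<Longrightarrow> (D 0 has_vector_derivative D 1 x) (at x)"
  using dDa[of x 0] by simp
lemma d1: "x \<in> I \<Longrightarrow> (D 1 has_vector_derivative D 2 x) (at x)"
  using dDa[of x 1] by (simp add: eval_nat_numeral)
lemma d2: "x \<in> I \<Longrightarrow> (D 2 has_vector_derivative D 3 x) (at x)"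
  using dDa[of x 2] by (simp add: eval_nat_numeral)

lemma kd: "x \<in> I \<Longrightarrow> (\<kappa> has_real_derivative Im (cnj (D 1 x) * D 3 x)) (at x)"
proof -
  assume x: "x \<in> I"
  have "((\<lambda>t. cnj (D 1 t) * D 2 t) has_vector_derivative (cnj (D 1 x) * D 3 x + cnj (D 2 x) * D 2 x)) (at x)"
    by (rule has_vector_derivative_mult[OF has_vector_derivative_cnj[OF d1[OF x]] d2[OF x]])
  from has_field_derivative_Im[OF this]
  have "((\<lambda>t. Im (cnj (D 1 t) * D 2 t)) has_real_derivative Im (cnj (D 1 x) * D 3 x)) (at x)"
    by simp
  then show ?thesis
    by (rule has_field_derivative_transform_within_open[of _ _ x I]) (use x K in auto)
qed

lemma kd': "x \<in> I \<Longrightarrow> (\<kappa> has_real_derivative deriv \<kappa> x) (at x)"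
proof -
  assume x: "x \<in> I"
  have "deriv \<kappa> x = Im (cnj (D 1 x) * D 3 x)" by (rule DERIV_imp_deriv[OF kd[OF x]])
  then show ?thesis using kd[OF x] by simp
qed

lemma kcont: "continuous_on {0..L} \<kappa>"
proof -
  have "continuous_on {0..L} (\<lambda>x. Im (cnj (D 1 x) * D 2 x))"
    by (intro continuous_intros contD)
  moreover have "continuous_on {0..L} \<kappa> = continuous_on {0..L} (\<lambda>x. Im (cnj (D 1 x) * D 2 x))"
    by (rule continuous_on_cong[OF refl K])
  ultimately show ?thesis by simp
qed

lemma knz: "x \<in> I \<Longrightarrow> \<kappa> x \<noteq> 0"
  using hyp[of x] by auto

lemma sign: "s \<in> I \<Longrightarrow> t \<in> I \<Longrightarrow> \<kappa> s * \<kappa> t > 0"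
proof -
  have *: "\<kappa> t * \<kappa> s > 0" if "s \<in> I" "t \<in> I" "t \<le> s" for s t
    using that by (intro sign_interval continuous_on_subset[OF kcont] knz) auto
  assume "s \<in> I" "t \<in> I"
  then show ?thesis using *[of s t] *[of t s] by (cases "t \<le> s") (auto simp: mult.commute)
qed

end



lemma recz: "z \<noteq> 0 \<Longrightarrow> Re (cnj z * z) > 0"
proof -
  assume "z \<noteq> 0"
  then have "Re z \<noteq> 0 \<or> Im z \<noteq> 0" by (simp add: complex_eq_iff)
  then have "0 < (Re z)\<^sup>2 + (Im z)\<^sup>2" by (simp add: sum_power2_gt_zero_iff)
  then show ?thesis by (simp add: power2_eq_square)
qed

lemma recz0: "Re (cnj z * z) \<ge> 0"
  by simp

context cv begin

lemma Gd: "x \<in> I \<Longrightarrow> ((\<lambda>t. \<kappa> t * Re (cnj (D 0 t) * D 0 t) - 2 * Im (cnj (D 0 t) * D 1 t))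
   has_real_derivative deriv \<kappa> x * Re (cnj (D 0 x) * D 0 x)) (at x)"
proof -
  assume x: "x \<in> I"
  have a: "((\<lambda>t. cnj (D 0 t) * D 0 t) has_vector_derivative (cnj (D 0 x) * D 1 x + cnj (D 1 x) * D 0 x)) (at x)"
    by (rule has_vector_derivative_mult[OF has_vector_derivative_cnj[OF d0[OF x]] d0[OF x]])
  have b: "((\<lambda>t. cnj (D 0 t) * D 1 t) has_vector_derivative (cnj (D 0 x) * D 2 x + cnj (D 1 x) * D 1 x)) (at x)"
    by (rule has_vector_derivative_mult[OF has_vector_derivative_cnj[OF d0[OF x]] d1[OF x]])
  note c = DERIV_diff[OF DERIV_mult[OF kd'[OF x] has_field_derivative_Re[OF a]] DERIV_cmult[OF has_field_derivative_Im[OF b], of 2]]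
  have eq: "deriv \<kappa> x * Re (cnj (D 0 x) * D 0 x) + Re (cnj (D 0 x) * D 1 x + cnj (D 1 x) * D 0 x) * \<kappa> x
      - 2 * Im (cnj (D 0 x) * D 2 x + cnj (D 1 x) * D 1 x) = deriv \<kappa> x * Re (cnj (D 0 x) * D 0 x)"
    using D2i[OF x] by (simp add: algebra_simps)
  show ?thesis by (rule DERIV_cong[OF c eq])
qed

lemma key:
  assumes s: "s \<in> I"
  shows "\<kappa> s * (\<kappa> s * Re (cnj (D 0 s) * D 0 s) - 2 * Im (cnj (D 0 s) * D 1 s)) > 0"
proof -
  define G where "G t = \<kappa> t * Re (cnj (D 0 t) * D 0 t) - 2 * Im (cnj (D 0 t) * D 1 t)" for t
  define H where "H t = \<kappa> s * G t" for t
  have Gc: "continuous_on {0..L} G" unfolding G_def by (intro continuous_intros kcont contD)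
  have Hc: "continuous_on {0..L} H" unfolding H_def by (intro continuous_intros Gc)
  have Hd: "(H has_real_derivative \<kappa> s * (deriv \<kappa> t * Re (cnj (D 0 t) * D 0 t))) (at t)" if "t \<in> I" for t
    unfolding H_def G_def by (rule DERIV_cmult[OF Gd[OF that]])
  have pos: "\<kappa> s * deriv \<kappa> t > 0" if t: "t \<in> I" for t
  proof -
    have "\<kappa> s * \<kappa> t > 0" using sign s t by blast
    moreover have "\<kappa> t * deriv \<kappa> t > 0" using hyp t by blast
    ultimately have "(\<kappa> s * \<kappa> t) * (\<kappa> t * deriv \<kappa> t) > 0" by (rule mult_pos_pos)
    then have "(\<kappa> t)\<^sup>2 * (\<kappa> s * deriv \<kappa> t) > 0" by (simp add: power2_eq_square ac_simps)
    then show ?thesis by (auto simp: zero_less_mult_iff)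
  qed
  have Hnn: "\<kappa> s * (deriv \<kappa> t * Re (cnj (D 0 t) * D 0 t)) \<ge> 0" if t: "t \<in> I" for t
  proof -
    have "(\<kappa> s * deriv \<kappa> t) * Re (cnj (D 0 t) * D 0 t) \<ge> 0"
      using pos[OF t] recz0[of "D 0 t"] by (intro mult_nonneg_nonneg[of "\<kappa> s * deriv \<kappa> t"]) auto
    then show ?thesis by (simp add: ac_simps)
  qed
  have H0: "H 0 = 0" unfolding H_def G_def using D0[of 0] g0 L by simp
  have mono: "H a \<le> H b" if ab: "0 \<le> a" "a \<le> b" "b \<le> s" for a b
  proof (rule DERIV_nonneg_imp_increasing_open[OF \<open>a \<le> b\<close>])
    fix x assume "a < x" "x < b"
    then have "x \<in> I" using ab s by auto
    then show "\<exists>y. DERIV H x :> y \<and> y \<ge> 0" using Hd Hnn by blast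
  next
    show "continuous_on {a..b} H" by (rule continuous_on_subset[OF Hc]) (use ab s in auto)
  qed
  have "\<exists>t0\<in>{0<..<s}. D 0 t0 \<noteq> 0"
  proof (rule ccontr)
    assume "\<not> ?thesis"
    then have z: "\<And>t. t \<in> {0<..<s} \<Longrightarrow> D 0 t = 0" by blast
    have m: "s / 2 \<in> I" using s by auto
    have "(D 0 has_vector_derivative 0) (at (s/2))"
      by (rule has_vector_derivative_transform_within_open[of "\<lambda>t. 0" 0 "s/2" "{0<..<s}"]) (use z s in auto)
    with d0[OF m] have "D 1 (s/2) = 0" using vector_derivative_unique_at by blast
    then show False using N1[of "s/2"] m by auto
  qed
  then obtain t0 where t0: "t0 \<in> {0<..<s}" "D 0 t0 \<noteq> 0" by blast
  have t0I: "t0 \<in> I" using t0 s by auto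
  have "H s > 0"
  proof (rule ccontr)
    assume "\<not> H s > 0"
    have Hz: "H t = 0" if t: "t \<in> {0<..<s}" for t
    proof -
      have "H 0 \<le> H t" "H t \<le> H s" using mono[of 0 t] mono[of t s] t by auto
      then show ?thesis using H0 \<open>\<not> H s > 0\<close> by linarith
    qed
    have "(H has_real_derivative 0) (at t0)"
      by (rule has_field_derivative_transform_within_open[of "\<lambda>t. 0" 0 t0 "{0<..<s}"]) (use Hz t0 in auto)
    with Hd[OF t0I] have "\<kappa> s * (deriv \<kappa> t0 * Re (cnj (D 0 t0) * D 0 t0)) = 0"
      using DERIV_unique by blast
    moreover have "(\<kappa> s * deriv \<kappa> t0) * Re (cnj (D 0 t0) * D 0 t0) > 0"
      using pos[OF t0I] recz[OF t0(2)] by (rule mult_pos_pos)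
    then have "\<kappa> s * (deriv \<kappa> t0 * Re (cnj (D 0 t0) * D 0 t0)) > 0" by (simp only: mult.assoc)
    ultimately show False by linarith
  qed
  then show ?thesis by (simp add: H_def G_def)
qed

lemma nzg: "s \<in> I \<Longrightarrow> \<gamma> s \<noteq> 0"
  using key[of s] D0[of s] by auto

lemma nzD: "s \<in> I \<Longrightarrow> D 0 s \<noteq> 0"
  using nzg[of s] D0[of s] by auto

end



context cv begin

lemma omega_props:
  assumes pta: "polar_tangential_angle L \<gamma> \<omega>" and x: "x \<in> I"
  shows "(\<omega> has_real_derivative deriv \<omega> x) (at x) \<and> \<kappa> x * deriv \<omega> x > 0"
proof -
  have sm: "smooth_on I \<omega>" and rel: "\<And>s. s \<in> I \<Longrightarrow> rot (\<omega> s) (\<gamma> s / complex_of_real (cmod (\<gamma> s))) = tangent L \<gamma> s"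
    using pta unfolding polar_tangential_angle_def by auto
  obtain E where E0: "\<And>x. x \<in> I \<Longrightarrow> E 0 x = \<omega> x"
    and Ed: "\<And>n x. x \<in> I \<Longrightarrow> (E n has_vector_derivative E (Suc n) x) (at x within I)"
    using sm unfolding smooth_on_def by blast
  have "(E 0 has_vector_derivative E 1 x) (at x)" using Ed[OF x, of 0] at_within_open[OF x] by simp
  then have "(\<omega> has_vector_derivative E 1 x) (at x)"
    by (rule has_vector_derivative_transform_within_open[of _ _ x I]) (use x E0 in auto)
  then have wd: "(\<omega> has_real_derivative E 1 x) (at x)"
    by (simp add: has_real_derivative_iff_has_vector_derivative)
  have dw: "deriv \<omega> x = E 1 x" by (rule DERIV_imp_deriv[OF wd])
  have relt: "cis (\<omega> t) * D 0 t = complex_of_real (cmod (D 0 t)) * D 1 t" if t: "t \<in> I" for t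
  proof -
    have ne: "complex_of_real (cmod (D 0 t)) \<noteq> 0" using nzD[OF t] by simp
    have "cis (\<omega> t) * (D 0 t / complex_of_real (cmod (D 0 t))) = D 1 t"
      using rel[OF t] D0[of t] Tg[of t] t by (simp add: rot_def)
    then have "cis (\<omega> t) * (D 0 t / complex_of_real (cmod (D 0 t))) * complex_of_real (cmod (D 0 t))
       = complex_of_real (cmod (D 0 t)) * D 1 t" by simp
    then show ?thesis using ne by (simp add: field_simps)
  qed
  have Pz: "Im (cis (\<omega> t) * D 0 t * cnj (D 1 t)) = 0" if t: "t \<in> I" for t
  proof -
    have "cis (\<omega> t) * D 0 t * cnj (D 1 t) = complex_of_real (cmod (D 0 t)) * D 1 t * cnj (D 1 t)"
      by (simp only: relt[OF t])
    also have "\<dots> = complex_of_real (cmod (D 0 t)) * (D 1 t * cnj (D 1 t))" by (simp only: mult.assoc)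
    also have "\<dots> = complex_of_real (cmod (D 0 t))" using N1[of t] t by simp
    finally show ?thesis by simp
  qed
  define c where "c = cis (\<omega> x)"
  define a where "a = D 0 x"
  define b where "b = D 1 x"
  define n where "n = cmod a"
  define e where "e = E 1 x"
  have cb: "c * a = complex_of_real n * b" using relt[OF x] by (simp add: c_def a_def b_def n_def)
  have bb: "b * cnj b = 1" using N1[of x] x by (simp add: b_def)
  have nz: "n \<noteq> 0" using nzD[OF x] by (simp add: n_def a_def)
  have P': "((\<lambda>t. cis (\<omega> t) * D 0 t * cnj (D 1 t)) has_vector_derivative
      (c * a) * cnj (D 2 x) + (c * b + complex_of_real e * \<i> * c * a) * cnj b) (at x)"
    unfolding c_def a_def b_def e_def
    by (rule has_vector_derivative_mult[OF has_vector_derivative_mult[OF hvd_cis[OF wd] d0[OF x]] has_vector_derivative_cnj[OF d1[OF x]]])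
  have e1: "(c * a) * cnj (D 2 x) = - \<i> * complex_of_real (\<kappa> x * n)"
  proof -
    have "(c * a) * cnj (D 2 x) = complex_of_real n * b * cnj (\<i> * complex_of_real (\<kappa> x) * b)"
      using cb D2i[OF x] by (simp add: b_def)
    also have "\<dots> = - \<i> * complex_of_real (\<kappa> x * n) * (b * cnj b)" by (simp add: algebra_simps)
    also have "\<dots> = - \<i> * complex_of_real (\<kappa> x * n)" using bb by simp
    finally show ?thesis .
  qed
  have e2: "(c * b + complex_of_real e * \<i> * c * a) * cnj b = c + \<i> * complex_of_real (e * n)"
  proof -
    have "(c * b + complex_of_real e * \<i> * c * a) * cnj b = c * (b * cnj b) + complex_of_real e * \<i> * (c * a) * cnj b"
      by (simp add: algebra_simps)
    also have "\<dots> = c * (b * cnj b) + complex_of_real e * \<i> * (complex_of_real n * b) * cnj b"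
      by (simp only: cb)
    also have "\<dots> = c * (b * cnj b) + \<i> * complex_of_real (e * n) * (b * cnj b)"
      by (simp add: algebra_simps)
    also have "\<dots> = c + \<i> * complex_of_real (e * n)" using bb by simp
    finally show ?thesis .
  qed
  have ImP: "((\<lambda>t. Im (cis (\<omega> t) * D 0 t * cnj (D 1 t))) has_real_derivative
      - (\<kappa> x * n) + Im c + e * n) (at x)"
  proof -
    have "Im ((c * a) * cnj (D 2 x) + (c * b + complex_of_real e * \<i> * c * a) * cnj b) = - (\<kappa> x * n) + Im c + e * n"
      unfolding e1 e2 by simp
    then show ?thesis by (rule DERIV_cong[OF has_field_derivative_Im[OF P']])
  qed
  have "((\<lambda>t. Im (cis (\<omega> t) * D 0 t * cnj (D 1 t))) has_real_derivative 0) (at x)"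
    by (rule has_field_derivative_transform_within_open[of "\<lambda>t. 0" 0 x I]) (use x Pz in auto)
  then have z1: "- (\<kappa> x * n) + Im c + e * n = 0" using ImP DERIV_unique by blast
  have aa: "a * cnj a = complex_of_real (n^2)" unfolding n_def by (rule complex_norm_square[symmetric])
  have "c * (a * cnj a) = complex_of_real n * (b * cnj a)" using cb by (simp add: mult.assoc[symmetric])
  then have "c * complex_of_real (n^2) = complex_of_real n * (b * cnj a)" using aa by simp
  then have "Im (c * complex_of_real (n^2)) = Im (complex_of_real n * (b * cnj a))" by simp
  then have "Im c * n^2 = n * Im (cnj a * b)" by (simp add: mult.commute)
  then have hc: "Im c * n = Im (cnj a * b)" using nz by (simp add: power2_eq_square)
  define h where "h = Im (cnj a * b)"
  define N where "N = Re (cnj a * a)"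
  have Nn: "N = n^2" using arg_cong[OF aa, of Re] by (simp add: N_def mult.commute)
  have hN: "h = \<kappa> x * N - e * N"
  proof -
    have "n * (- (\<kappa> x * n) + Im c + e * n) = 0" using z1 by simp
    then show ?thesis using hc Nn by (simp add: h_def algebra_simps power2_eq_square)
  qed
  have k: "\<kappa> x * (\<kappa> x * N - 2 * h) > 0" using key[OF x] by (simp add: N_def h_def a_def b_def)
  have "\<kappa> x * (\<kappa> x * N - 2 * h) = 2 * ((\<kappa> x * e) * N) - (\<kappa> x * \<kappa> x) * N"
    by (simp add: hN algebra_simps)
  moreover have "(\<kappa> x * \<kappa> x) * N \<ge> 0" by (simp add: Nn)
  ultimately have "(\<kappa> x * e) * N > 0" using k by linarith
  moreover have "N \<ge> 0" by (simp add: Nn)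
  ultimately have "\<kappa> x * e > 0"
    by (metis mult_nonpos_nonneg not_less)
  then show ?thesis using wd dw e_def by simp
qed

end



lemma psi_alg:
  fixes a b c :: complex and n k :: real
  assumes bb: "b * cnj b = 1" and aa: "a * cnj a = complex_of_real (n^2)" and nz: "n \<noteq> 0"
  shows "c * a * cnj b * complex_of_real (- (inverse n * (Re (cnj a * b) / n) * inverse n))
     + (c * a * cnj (\<i> * complex_of_real k * b)
        + (c * b + complex_of_real (k - Im (cnj a * b) / n^2) * \<i> * c * a) * cnj b) * complex_of_real (inverse n) = 0"
proof -
  define d where "d = c * a * cnj b"
  define p where "p = Re (cnj a * b)"
  define h where "h = Im (cnj a * b)"
  have s1: "c * a * cnj (\<i> * complex_of_real k * b) = - \<i> * complex_of_real k * d"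
    by (simp add: d_def algebra_simps)
  have s2: "(c * b + complex_of_real (k - h / n^2) * \<i> * c * a) * cnj b
      = c * (b * cnj b) + \<i> * complex_of_real (k - h / n^2) * d"
    by (simp add: d_def algebra_simps)
  have s3: "d * (cnj a * b) = c * complex_of_real (n^2)"
  proof -
    have "d * (cnj a * b) = c * (a * cnj a) * (b * cnj b)" by (simp add: d_def algebra_simps)
    then show ?thesis using aa bb by simp
  qed
  have s4: "cnj a * b = complex_of_real p + \<i> * complex_of_real h"
    by (simp add: p_def h_def complex_eq_iff)
  have nz2: "complex_of_real (n^2) \<noteq> 0" using nz by simp
  have s5': "c = d * (cnj a * b) / complex_of_real (n^2)"
  proof -
    have "c = c * complex_of_real (n^2) / complex_of_real (n^2)" using nz2 by simp
    also have "\<dots> = d * (cnj a * b) / complex_of_real (n^2)" by (simp only: s3)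
    finally show ?thesis .
  qed
  have s5: "c = d * (complex_of_real p + \<i> * complex_of_real h) / complex_of_real (n^2)"
    using s5' unfolding s4 .
  show ?thesis
    unfolding s1 p_def[symmetric] h_def[symmetric] d_def[symmetric] s2 bb
    apply (subst s5)
    using nz by (simp add: field_simps power2_eq_square)
qed

context cv begin

lemma N1': "x \<in> {0..L} \<Longrightarrow> cmod (D 1 x) = 1"
  using arc Tg unfolding arclength_param_def by auto

lemma exists_omega: "\<exists>\<omega>. polar_tangential_angle L \<gamma> \<omega>"
proof -
  define w where "w = (\<lambda>x. (Re (D 1 x) * Im (D 2 x) - Im (D 1 x) * Re (D 2 x))
     - (Re (D 0 x) * Im (D 1 x) - Im (D 0 x) * Re (D 1 x)) * inverse (Re (D 0 x) ^ 2 + Im (D 0 x) ^ 2))"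
  have wal: "w \<in> alg D" unfolding w_def
    by (intro alg.alg_diff alg.alg_mult alg.alg_Re alg.alg_Im alg.alg_q)
  obtain w' where "w' \<in> alg D" and w': "\<And>x. x \<in> I \<Longrightarrow> (w has_real_derivative w' x) (at x)"
    using alg_deriv[OF dDa nzD wal] by blast
  have "\<exists>F. \<forall>x. (0::ereal) < ereal x \<longrightarrow> ereal x < ereal L \<longrightarrow> (F has_vector_derivative w x) (at x)"
    by (rule einterval_antiderivative) (use L w' DERIV_isCont in auto)
  then obtain w0 where w0v: "\<And>x. x \<in> I \<Longrightarrow> (w0 has_vector_derivative w x) (at x)"
    by auto
  have w0: "x \<in> I \<Longrightarrow> (w0 has_real_derivative w x) (at x)" for x
    using w0v[of x] by (simp add: has_real_derivative_iff_has_vector_derivative)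
  have wk: "w x = \<kappa> x - Im (cnj (D 0 x) * D 1 x) / (cmod (D 0 x))^2" if x: "x \<in> I" for x
    using K[of x] x by (simp add: w_def cmod_power2 divide_inverse)
  define \<Psi> where "\<Psi> t = cis (w0 t) * D 0 t * cnj (D 1 t) * complex_of_real (inverse (cmod (D 0 t)))" for t
  have \<Psi>d: "(\<Psi> has_vector_derivative 0) (at x within I)" if x: "x \<in> I" for x
  proof -
    have n0: "cmod (D 0 x) \<noteq> 0" using nzD[OF x] by simp
    have P: "(\<Psi> has_vector_derivative
       cis (w0 x) * D 0 x * cnj (D 1 x) * complex_of_real (- (inverse (cmod (D 0 x)) * (Re (cnj (D 0 x) * D 1 x) / cmod (D 0 x)) * inverse (cmod (D 0 x))))
     + (cis (w0 x) * D 0 x * cnj (D 2 x) + (cis (w0 x) * D 1 x + complex_of_real (w x) * \<i> * cis (w0 x) * D 0 x) * cnj (D 1 x)) * complex_of_real (inverse (cmod (D 0 x)))) (at x)"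
      unfolding \<Psi>_def
      by (rule has_vector_derivative_mult[OF has_vector_derivative_mult[OF has_vector_derivative_mult[OF hvd_cis[OF w0[OF x]] d0[OF x]] has_vector_derivative_cnj[OF d1[OF x]]]
            has_vector_derivative_of_real[OF DERIV_inverse'[OF hvd_cmod[OF d0[OF x] nzD[OF x]] n0]]])
    have "cis (w0 x) * D 0 x * cnj (D 1 x) * complex_of_real (- (inverse (cmod (D 0 x)) * (Re (cnj (D 0 x) * D 1 x) / cmod (D 0 x)) * inverse (cmod (D 0 x))))
     + (cis (w0 x) * D 0 x * cnj (D 2 x) + (cis (w0 x) * D 1 x + complex_of_real (w x) * \<i> * cis (w0 x) * D 0 x) * cnj (D 1 x)) * complex_of_real (inverse (cmod (D 0 x))) = 0"
      unfolding D2i[OF x] wk[OF x]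
      by (rule psi_alg[OF N1[of x] complex_norm_square[symmetric] n0]) (use x in auto)
    with P show ?thesis by (simp add: has_vector_derivative_at_within)
  qed
  obtain C where C: "\<And>t. t \<in> I \<Longrightarrow> \<Psi> t = C"
  proof -
    have "convex I" by (simp add: convex_real_interval)
    then show ?thesis using has_vector_derivative_zero_constant[of I \<Psi>] \<Psi>d that by metis
  qed
  have m: "L / 2 \<in> I" using L by auto
  have nC: "cmod C = 1"
  proof -
    have "cmod C = cmod (\<Psi> (L/2))" using C[OF m] by simp
    also have "\<dots> = cmod (D 0 (L/2)) * cmod (D 1 (L/2)) * inverse (cmod (D 0 (L/2)))"
      by (simp add: \<Psi>_def norm_mult norm_inverse)
    also have "\<dots> = 1" using N1'[of "L/2"] nzD[OF m] m by simp
    finally show ?thesis .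
  qed
  define \<alpha> where "\<alpha> = Arg C"
  have "C \<noteq> 0" using nC by auto
  then have ca: "cis \<alpha> = C" using nC cis_Arg[of C] by (auto simp: \<alpha>_def sgn_div_norm)
  define \<omega> where "\<omega> t = w0 t - \<alpha>" for t
  have \<omega>d: "(\<omega> has_vector_derivative w x) (at x within I)" if "x \<in> I" for x
  proof -
    have "(\<omega> has_real_derivative w x) (at x)" unfolding \<omega>_def
      using DERIV_diff[OF w0[OF that] DERIV_const[of \<alpha>]] by simp
    then show ?thesis by (simp add: has_real_derivative_iff_has_vector_derivative has_vector_derivative_at_within)
  qed
  have sm: "smooth_on I \<omega>"
  proof (rule smooth_closed[of "insert \<omega> (alg D)"])
    fix f assume "f \<in> insert \<omega> (alg D)"
    then show "\<exists>g\<in>insert \<omega> (alg D). \<forall>x\<in>I. (f has_vector_derivative g x) (at x within I)"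
    proof
      assume "f = \<omega>"
      then show ?thesis using \<omega>d \<open>w \<in> alg D\<close> by blast
    next
      assume "f \<in> alg D"
      then obtain g where "g \<in> alg D" "\<forall>x\<in>I. (f has_real_derivative g x) (at x)"
        using alg_deriv[OF dDa nzD] by blast
      then show ?thesis
        by (auto simp: has_real_derivative_iff_has_vector_derivative intro: has_vector_derivative_at_within)
    qed
  qed simp
  have rel: "rot (\<omega> t) (\<gamma> t / complex_of_real (cmod (\<gamma> t))) = tangent L \<gamma> t" if t: "t \<in> I" for t
  proof -
    have n0: "complex_of_real (cmod (D 0 t)) \<noteq> 0" using nzD[OF t] by simp
    have e: "cis (w0 t) * D 0 t * cnj (D 1 t) * complex_of_real (inverse (cmod (D 0 t))) = cis \<alpha>"
      using C[OF t] ca by (simp add: \<Psi>_def)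
    have N1t: "D 1 t * cnj (D 1 t) = 1" using N1 t by auto
    have "cis (w0 t) * D 0 t * complex_of_real (inverse (cmod (D 0 t))) * (D 1 t * cnj (D 1 t))
       = (cis (w0 t) * D 0 t * cnj (D 1 t) * complex_of_real (inverse (cmod (D 0 t)))) * D 1 t"
      by (simp only: mult_ac)
    also have "\<dots> = cis \<alpha> * D 1 t" by (simp only: e)
    finally have e2: "cis (w0 t) * D 0 t * complex_of_real (inverse (cmod (D 0 t))) = cis \<alpha> * D 1 t"
      unfolding N1t by simp
    have "rot (\<omega> t) (\<gamma> t / complex_of_real (cmod (\<gamma> t))) = cis (w0 t) / cis \<alpha> * (D 0 t / complex_of_real (cmod (D 0 t)))"
      using D0[of t] t by (simp add: rot_def \<omega>_def cis_divide)
    also have "\<dots> = (cis (w0 t) * D 0 t * complex_of_real (inverse (cmod (D 0 t)))) / cis \<alpha>"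
      by (simp add: divide_inverse mult_ac)
    also have "\<dots> = D 1 t" unfolding e2 by simp
    finally show ?thesis using Tg[of t] t by simp
  qed
  show ?thesis unfolding polar_tangential_angle_def using sm rel by blast
qed

end

theorem corollary2p7:
  fixes L :: real and \<gamma> :: "real \<Rightarrow> complex"
  assumes "L > 0"
    and "smooth_on {0..L} \<gamma>"
    and "arclength_param L \<gamma>"
    and "\<gamma> 0 = 0"
    and "\<forall>s\<in>{0<..<L}. curvature L \<gamma> s * deriv (curvature L \<gamma>) s > 0"
  shows "(\<forall>s\<in>{0<..<L}. \<gamma> s \<noteq> 0)
       \<and> (\<exists>\<omega>. polar_tangential_angle L \<gamma> \<omega>)
       \<and> (\<forall>\<omega>. polar_tangential_angle L \<gamma> \<omega> \<longrightarrow>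
            (\<forall>s\<in>{0<..<L}. curvature L \<gamma> s * deriv \<omega> s > 0)
            \<and> (strict_mono_on {0<..<L} \<omega> \<or> strict_mono_on {0<..<L} (\<lambda>s. - \<omega> s)))"
proof -
  obtain D where D0: "\<forall>x\<in>{0..L}. D 0 x = \<gamma> x"
    and dD: "\<forall>n. \<forall>x\<in>{0..L}. (D n has_vector_derivative D (Suc n) x) (at x within {0..L})"
    using assms(2) unfolding smooth_on_def by blast
  interpret cv L \<gamma> D using assms D0 dD by unfold_locales auto
  have p1: "\<forall>s\<in>{0<..<L}. \<gamma> s \<noteq> 0" using nzg by auto
  have p2: "\<exists>\<omega>. polar_tangential_angle L \<gamma> \<omega>" by (rule exists_omega)
  have p3: "(\<forall>s\<in>{0<..<L}. curvature L \<gamma> s * deriv \<omega> s > 0)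
            \<and> (strict_mono_on {0<..<L} \<omega> \<or> strict_mono_on {0<..<L} (\<lambda>s. - \<omega> s))"
    if pta: "polar_tangential_angle L \<gamma> \<omega>" for \<omega>
  proof -
    have a: "\<And>s. s \<in> I \<Longrightarrow> \<kappa> s * deriv \<omega> s > 0" using omega_props[OF pta] by blast
    have dr: "\<And>s. s \<in> I \<Longrightarrow> (\<omega> has_real_derivative deriv \<omega> s) (at s)" using omega_props[OF pta] by blast
    have m: "L / 2 \<in> I" using L by auto
    have "strict_mono_on I \<omega> \<or> strict_mono_on I (\<lambda>s. - \<omega> s)"
    proof (cases "\<kappa> (L/2) > 0")
      case True
      have pos: "deriv \<omega> s > 0" if s: "s \<in> I" for s
      proof -
        have "\<kappa> s > 0" using sign[OF m s] True by (auto simp: zero_less_mult_iff)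
        then show ?thesis using a[OF s] by (auto simp: zero_less_mult_iff)
      qed
      have "strict_mono_on I \<omega>"
      proof (rule strict_mono_onI)
        fix r s assume rs: "r \<in> I" "s \<in> I" "r < s"
        show "\<omega> r < \<omega> s"
        proof (rule DERIV_pos_imp_increasing[OF \<open>r < s\<close>])
          fix x assume "r \<le> x" "x \<le> s"
          then have x: "x \<in> I" using rs by auto
          show "\<exists>y. DERIV \<omega> x :> y \<and> 0 < y" using dr[OF x] pos[OF x] by blast
        qed
      qed
      then show ?thesis by blast
    next
      case False
      then have neg0: "\<kappa> (L/2) < 0" using knz[OF m] by linarith
      have neg: "- deriv \<omega> s > 0" if s: "s \<in> I" for s
      proof -
        have "\<kappa> s < 0" using sign[OF m s] neg0 by (auto simp: zero_less_mult_iff)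
        then show ?thesis using a[OF s] by (auto simp: zero_less_mult_iff)
      qed
      have "strict_mono_on I (\<lambda>s. - \<omega> s)"
      proof (rule strict_mono_onI)
        fix r s assume rs: "r \<in> I" "s \<in> I" "r < s"
        show "- \<omega> r < - \<omega> s"
        proof (rule DERIV_pos_imp_increasing[OF \<open>r < s\<close>, of "\<lambda>s. - \<omega> s"])
          fix x assume "r \<le> x" "x \<le> s"
          then have x: "x \<in> I" using rs by auto
          show "\<exists>y. DERIV (\<lambda>s. - \<omega> s) x :> y \<and> 0 < y" using DERIV_minus[OF dr[OF x]] neg[OF x] by blast
        qed
      qed
      then show ?thesis by blast
    qed
    then show ?thesis using a by blast
  qed
  show ?thesis using p1 p2 p3 by blast
qed

end
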